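(* Let $m \ge 1$ be an integer, let $N \ge 0$ and $s$ be integers with $0 \le s \le N$, and let $y \in (0,1)$, all held fixed. For real $n > 0$ let $\beta_n$ denote the Beta-Binomial distribution on $\{0,1,\ldots,m\}$ with probability mass function \[ p(l \mid y, n, m, s, N) = \binom{m}{l}\frac{B(l + ny + s,\; m - l + n(1-y) + N - s)}{B(ny + s,\; n(1-y) + N - s)}, \qquad l = 0,1,\ldots,m, \] where $B(\cdot,\cdot)$ is the Beta function. Let $0 < \underline{n} < \overline{n}$ and define, for $l \in \{0,\ldots,m\}$, \[ \mathcal{L}_{\overline{n},\underline{n}}(l) := \frac{p(l \mid y, \overline{n}, m, s, N)}{p(l \mid y, \underline{n}, m, s, N)}. \] Then: if $\mathcal{L}_{\overline{n},\underline{n}}(0) \le 1$ and $\mathcal{L}_{\overline{n},\underline{n}}(m) \ge 1$, then $\beta_{\overline{n}} \ge_{\mathrm{st}} \beta_{\underline{n}}$; and if $\mathcal{L}_{\overline{n},\underline{n}}(0) \ge 1$ and $\mathcal{L}_{\overline{n},\underline{n}}(m) \le 1$, then $\beta_{\overline{n}} \le_{\mathrm{st}} \beta_{\underline{n}}$.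
   Context: For two probability distributions $P, Q$ on $\{0,1,\ldots,m\}$, first-order stochastic dominance $P \ge_{\mathrm{st}} Q$ means $P(\{l' : l' > l\}) \ge Q(\{l' : l' > l\})$ for every $l$ (equivalently, the cumulative distribution function of $P$ is pointwise no larger than that of $Q$); $P \le_{\mathrm{st}} Q$ means $Q \ge_{\mathrm{st}} P$. *)

theory Defs
  imports "HOL-Analysis.Analysis"
begin

definition bb_pmf :: "real \<Rightarrow> real \<Rightarrow> nat \<Rightarrow> nat \<Rightarrow> nat \<Rightarrow> nat \<Rightarrow> real" where
  "bb_pmf y n m s N l =
     real (m choose l) * Beta (real l + n * y + real s) (real m - real l + n * (1 - y) + real N - real s)
       / Beta (n * y + real s) (n * (1 - y) + real N - real s)"

definition st_ge :: "nat \<Rightarrow> (nat \<Rightarrow> real) \<Rightarrow> (nat \<Rightarrow> real) \<Rightarrow> bool" where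
  "st_ge m P Q \<longleftrightarrow> (\<forall>l. (\<Sum>l'\<in>{l<..m}. P l') \<ge> (\<Sum>l'\<in>{l<..m}. Q l'))"

definition LR :: "real \<Rightarrow> nat \<Rightarrow> nat \<Rightarrow> nat \<Rightarrow> real \<Rightarrow> real \<Rightarrow> nat \<Rightarrow> real" where
  "LR y m s N nhi nlo l = bb_pmf y nhi m s N l / bb_pmf y nlo m s N l"

end

theory Submission imports Defs "HOL-Computational_Algebra.Formal_Power_Series" begin
lemma poch_vdm:
  fixes a b :: real
  shows "(\<Sum>k\<in>{0..n}. real (n choose k) * pochhammer a k * pochhammer b (n-k)) = pochhammer (a+b) n"
proof -
  have "(\<Sum>k\<in>{0..n}. ((-a) gchoose k) * ((-b) gchoose (n - k))) = (-a + -b) gchoose n"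
    by (rule gbinomial_Vandermonde)
  hence "(\<Sum>k\<in>{0..n}. (- 1) ^ k * pochhammer a k / fact k * ((- 1) ^ (n-k) * pochhammer b (n-k) / fact (n-k)))
     = (- 1) ^ n * pochhammer (a+b) n / fact n"
    by (simp add: gbinomial_pochhammer add.commute)
  moreover have "\<And>k. k \<in> {0..n} \<Longrightarrow> (- 1) ^ k * pochhammer a k / fact k * ((- 1) ^ (n-k) * pochhammer b (n-k) / fact (n-k))
     = (- 1) ^ n / fact n * (real (n choose k) * pochhammer a k * pochhammer b (n-k))"
  proof -
    fix k assume k: "k \<in> {0..n}"
    hence kn: "k \<le> n" by simp
    have pm: "(-1::real)^k * (-1)^(n-k) = (-1)^n" using kn by (simp add: power_add[symmetric])
    have bc: "real (n choose k) = fact n / (fact k * fact (n-k))"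
      using binomial_fact[OF kn] by simp
    show "?thesis k" using pm unfolding bc by (simp add: field_simps)
  qed
  ultimately have "(- 1) ^ n / fact n * (\<Sum>k\<in>{0..n}. real (n choose k) * pochhammer a k * pochhammer b (n-k))
     = (- 1) ^ n * pochhammer (a+b) n / fact n"
    by (simp add: sum_distrib_left)
  thus ?thesis by (simp add: field_simps)
qed

lemma Gamma_poch:
  fixes z :: real
  assumes "z > 0"
  shows "Gamma (z + real n) = pochhammer z n * Gamma z"
proof -
  have "z \<notin> \<int>\<^sub>\<le>\<^sub>0" using assms by (auto elim!: nonpos_Ints_cases)
  from pochhammer_Gamma[OF this, of n] show ?thesis
    using Gamma_real_pos[OF assms] by (simp add: field_simps)
qed

definition qq :: "real \<Rightarrow> real \<Rightarrow> nat \<Rightarrow> nat \<Rightarrow> real" where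
  "qq a b m l = real (m choose l) * pochhammer a l * pochhammer b (m - l) / pochhammer (a + b) m"

lemma bb_eq:
  assumes "n > 0" "0 < y" "y < 1" "s \<le> N" "l \<le> m"
  shows "bb_pmf y n m s N l = qq (n*y + real s) (n*(1-y) + real N - real s) m l"
proof -
  define a where "a = n*y + real s"
  define b where "b = n*(1-y) + real N - real s"
  have p1: "n*y > 0" "n*(1-y) > 0" using assms by simp_all
  have p2: "real N - real s \<ge> 0" using assms by simp
  have a: "a > 0" unfolding a_def using p1 by simp
  have b: "b > 0" unfolding b_def using p1 p2 by simp
  have e1: "real l + n * y + real s = a + real l" unfolding a_def by simp
  have e2: "real m - real l + n * (1 - y) + real N - real s = b + real (m - l)"
    unfolding b_def using assms by (simp add: of_nat_diff)
  have e3: "a + real l + (b + real (m - l)) = (a + b) + real m"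
    using assms by (simp add: of_nat_diff)
  have g1: "Gamma (a + real l) = pochhammer a l * Gamma a" by (rule Gamma_poch[OF a])
  have g2: "Gamma (b + real (m - l)) = pochhammer b (m - l) * Gamma b" by (rule Gamma_poch[OF b])
  have ab: "a + b > 0" using a b by simp
  have g3: "Gamma ((a + b) + real m) = pochhammer (a + b) m * Gamma (a + b)" by (rule Gamma_poch[OF ab])
  have "pochhammer (a+b) m > 0" using ab by (rule pochhammer_pos)
  moreover have "Gamma a > 0" "Gamma b > 0" "Gamma (a+b) > 0" using a b ab by auto
  moreover have "bb_pmf y n m s N l = real (m choose l) * Beta (a + real l) (b + real (m - l)) / Beta a b"
    unfolding bb_pmf_def e1 e2 by (simp add: a_def b_def)
  ultimately have "bb_pmf y n m s N l = qq a b m l"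
    unfolding qq_def Beta_def e3 g1 g2 g3
    by (simp add: field_simps)
  thus ?thesis unfolding a_def b_def .
qed

lemma qq_pos:
  assumes "a > 0" "b > 0" "l \<le> m"
  shows "qq a b m l > 0"
  unfolding qq_def using assms by (auto intro!: divide_pos_pos mult_pos_pos pochhammer_pos)

lemma qq_sum:
  assumes "a > 0" "b > 0"
  shows "(\<Sum>l\<in>{0..m}. qq a b m l) = 1"
proof -
  have "pochhammer (a+b) m > 0" using assms by (intro pochhammer_pos) simp
  thus ?thesis unfolding qq_def using poch_vdm[of m a b]
    by (simp add: sum_divide_distrib[symmetric])
qed

lemma abstract_dom:
  fixes P Q :: "nat \<Rightarrow> real"
  assumes tot: "(\<Sum>l\<in>{0..m}. P l) = (\<Sum>l\<in>{0..m}. Q l)"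
    and up: "\<And>l. l < m \<Longrightarrow> S l \<Longrightarrow> S (Suc l)"
    and pos: "\<And>l. l \<le> m \<Longrightarrow> S l \<Longrightarrow> Q l \<le> P l"
    and neg: "\<And>l. l \<le> m \<Longrightarrow> \<not> S l \<Longrightarrow> P l \<le> Q l"
  shows "st_ge m P Q"
  unfolding st_ge_def
proof
  fix l
  show "(\<Sum>l'\<in>{l<..m}. Q l') \<le> (\<Sum>l'\<in>{l<..m}. P l')"
  proof (cases "l < m")
    case False thus ?thesis by simp
  next
    case True
    have upc: "S j" if "S i" "i \<le> j" "j \<le> m" for i j
      using that(2,1,3)
    proof (induction j rule: dec_induct)
      case base thus ?case by simp
    next
      case (step k) thus ?case using up by simp
    qed
    show ?thesis
    proof (cases "S (Suc l)")
      case True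
      have "\<And>j. j \<in> {l<..m} \<Longrightarrow> Q j \<le> P j"
        using upc[OF True] pos by auto
      thus ?thesis by (rule sum_mono)
    next
      case False
      have "\<And>j. j \<in> {0..l} \<Longrightarrow> P j \<le> Q j"
      proof -
        fix j assume "j \<in> {0..l}"
        hence "j \<le> m" "\<not> S j" using upc[of j "Suc l"] False \<open>l < m\<close> by auto
        thus "P j \<le> Q j" using neg by auto
      qed
      hence h: "(\<Sum>j\<in>{0..l}. P j) \<le> (\<Sum>j\<in>{0..l}. Q j)" by (rule sum_mono)
      have split: "{0..m} = {0..l} \<union> {l<..m}" using True by auto
      have "\<And>f::nat\<Rightarrow>real. (\<Sum>j\<in>{0..m}. f j) = (\<Sum>j\<in>{0..l}. f j) + (\<Sum>j\<in>{l<..m}. f j)"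
        unfolding split by (rule sum.union_disjoint) auto
      thus ?thesis using tot h by (metis add_le_cancel_left add_mono order_refl le_add_diff_inverse)
    qed
  qed
qed


definition rr :: "real \<Rightarrow> real \<Rightarrow> real \<Rightarrow> real \<Rightarrow> nat \<Rightarrow> nat \<Rightarrow> real" where
  "rr ah al bh bl m l = (ah + real l)/(al + real l) * ((bl + real (m - Suc l))/(bh + real (m - Suc l)))"

lemma ratio_step:
  assumes "ah > 0" "al > 0" "bh > 0" "bl > 0" "l < m"
  shows "qq ah bh m (Suc l) / qq al bl m (Suc l) = rr ah al bh bl m l * (qq ah bh m l / qq al bl m l)"
proof -
  define k where "k = m - Suc l"
  have mk: "m - l = Suc k" unfolding k_def using assms by simp
  have c1: "real (m choose l) > 0" "real (m choose Suc l) > 0" using assms by auto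
  have pp: "pochhammer ah l > 0" "pochhammer al l > 0" "pochhammer bh k > 0" "pochhammer bl k > 0"
    "pochhammer (ah+bh) m > 0" "pochhammer (al+bl) m > 0"
    using assms by (auto intro!: pochhammer_pos)
  have q: "ah + real l > 0" "al + real l > 0" "bh + real k > 0" "bl + real k > 0" using assms by auto
  have aux: "(zz0*(zz2*zz3)*zz4/zz5)/(zz0*(zz6*zz7)*zz8/zz9) = zz3/zz7*(zz10/zz11) * ((zz1*zz2*(zz4*zz11)/zz5)/(zz1*zz6*(zz8*zz10)/zz9))"
    if "zz0 \<noteq> 0" "zz1 \<noteq> 0" "zz2 \<noteq> 0" "zz3 \<noteq> 0" "zz4 \<noteq> 0" "zz5 \<noteq> 0" "zz6 \<noteq> 0" "zz7 \<noteq> 0" "zz8 \<noteq> 0"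
       "zz9 \<noteq> 0" "zz10 \<noteq> 0" "zz11 \<noteq> 0" for zz0 zz1 zz2 zz3 zz4 zz5 zz6 zz7 zz8 zz9 zz10 zz11 :: real
    using that by (simp add: field_simps)
  show ?thesis
    unfolding qq_def rr_def mk k_def[symmetric] pochhammer_Suc
    by (rule aux) (use c1 pp q in auto)
qed

lemma rr_pos:
  assumes "ah > 0" "al > 0" "bh > 0" "bl > 0"
  shows "rr ah al bh bl m l > 0"
  unfolding rr_def using assms by (auto intro!: mult_pos_pos divide_pos_pos add_pos_nonneg)

lemma rr_step:
  assumes "ah > 0" "al > 0" "bh > 0" "bl > 0" "al \<le> ah" "bl \<le> bh" "Suc i < m"
  shows "rr ah al bh bl m (Suc i) \<le> rr ah al bh bl m i"
proof -
  define k where "k = m - Suc (Suc i)"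
  have mk: "m - Suc i = Suc k" unfolding k_def using assms by simp
  have f: "(ah + real (Suc i))/(al + real (Suc i)) \<le> (ah + real i)/(al + real i)"
    using assms by (simp add: divide_simps) (simp add: algebra_simps)
  have g: "(bl + real k)/(bh + real k) \<le> (bl + real (Suc k))/(bh + real (Suc k))"
    using assms by (simp add: divide_simps) (simp add: algebra_simps)
  have n1: "0 \<le> (bl + real k)/(bh + real k)" using assms by auto
  have n2: "0 \<le> (ah + real i)/(al + real i)" using assms by auto
  show ?thesis unfolding rr_def mk k_def[symmetric]
    by (rule mult_mono[OF f g n2 n1])
qed

lemma rr_anti:
  assumes "ah > 0" "al > 0" "bh > 0" "bl > 0" "al \<le> ah" "bl \<le> bh" "i \<le> j" "j < m"
  shows "rr ah al bh bl m j \<le> rr ah al bh bl m i"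
  using assms(7,8)
proof (induction j rule: dec_induct)
  case base thus ?case by simp
next
  case (step k)
  have "rr ah al bh bl m (Suc k) \<le> rr ah al bh bl m k"
    using rr_step[OF assms(1-6)] step by simp
  thus ?case using step by simp
qed

theorem lemma1:
  fixes m s N :: nat and y nlo nhi :: real
  assumes "m \<ge> 1" and "s \<le> N" and "0 < y" and "y < 1"
    and "0 < nlo" and "nlo < nhi"
  shows "(LR y m s N nhi nlo 0 \<le> 1 \<and> LR y m s N nhi nlo m \<ge> 1
            \<longrightarrow> st_ge m (bb_pmf y nhi m s N) (bb_pmf y nlo m s N))
       \<and> (LR y m s N nhi nlo 0 \<ge> 1 \<and> LR y m s N nhi nlo m \<le> 1
            \<longrightarrow> st_ge m (bb_pmf y nlo m s N) (bb_pmf y nhi m s N))"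

proof -
  define al where "al = nlo*y + real s"
  define bl where "bl = nlo*(1-y) + real N - real s"
  define ah where "ah = nhi*y + real s"
  define bh where "bh = nhi*(1-y) + real N - real s"
  have nhi: "nhi > 0" using assms by simp
  have p1: "nlo*y > 0" "nlo*(1-y) > 0" "nhi*y > 0" "nhi*(1-y) > 0" using assms by simp_all
  have p2: "real N - real s \<ge> 0" using assms by simp
  have al: "al > 0" and bl: "bl > 0" and ah: "ah > 0" and bh: "bh > 0"
    unfolding al_def bl_def ah_def bh_def using p1 p2 by simp_all
  have le1: "al \<le> ah" unfolding al_def ah_def using assms by (simp add: mult_right_mono)
  have le2: "bl \<le> bh" unfolding bl_def bh_def using assms by (simp add: mult_right_mono)
  define P where "P = bb_pmf y nhi m s N"
  define Q where "Q = bb_pmf y nlo m s N"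
  have Peq: "\<And>l. l \<le> m \<Longrightarrow> P l = qq ah bh m l"
    unfolding P_def ah_def bh_def using bb_eq[OF nhi] assms by auto
  have Qeq: "\<And>l. l \<le> m \<Longrightarrow> Q l = qq al bl m l"
    unfolding Q_def al_def bl_def using bb_eq assms by auto
  have Ppos: "\<And>l. l \<le> m \<Longrightarrow> P l > 0" using Peq qq_pos ah bh by simp
  have Qpos: "\<And>l. l \<le> m \<Longrightarrow> Q l > 0" using Qeq qq_pos al bl by simp
  have totP: "(\<Sum>l\<in>{0..m}. P l) = 1" using Peq qq_sum[OF ah bh, of m] by simp
  have totQ: "(\<Sum>l\<in>{0..m}. Q l) = 1" using Qeq qq_sum[OF al bl, of m] by simp
  define L where "L l = P l / Q l" for l
  define r where "r = rr ah al bh bl m"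
  have Lpos: "\<And>l. l \<le> m \<Longrightarrow> L l > 0" unfolding L_def using Ppos Qpos by simp
  have Lstep: "\<And>l. l < m \<Longrightarrow> L (Suc l) = r l * L l"
    unfolding L_def r_def using Peq Qeq ratio_step[OF ah al bh bl] by simp
  have rpos: "\<And>l. r l > 0" unfolding r_def using rr_pos[OF ah al bh bl] by simp
  have ranti: "\<And>i j. i \<le> j \<Longrightarrow> j < m \<Longrightarrow> r j \<le> r i"
    unfolding r_def using rr_anti[OF ah al bh bl le1 le2] by simp
  have LR0: "LR y m s N nhi nlo 0 = L 0" and LRm: "LR y m s N nhi nlo m = L m"
    unfolding LR_def L_def P_def Q_def by simp_all
  have part1: "st_ge m P Q" if h0: "L 0 \<le> 1" and hm: "L m \<ge> 1"
  proof (rule abstract_dom[where S = "\<lambda>l. L l \<ge> 1"])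
    show "(\<Sum>l\<in>{0..m}. P l) = (\<Sum>l\<in>{0..m}. Q l)" using totP totQ by simp
  next
    fix l assume lm: "l < m" and S: "1 \<le> L l"
    show "1 \<le> L (Suc l)"
    proof (rule ccontr)
      assume c: "\<not> 1 \<le> L (Suc l)"
      have rl: "r l < 1"
      proof (rule ccontr)
        assume "\<not> r l < 1"
        hence "1 \<le> r l * L l" using S by (simp add: one_le_mult_iff mult_mono[of 1 "r l" 1 "L l", simplified])
        thus False using c Lstep[OF lm] by simp
      qed
      have "L j \<le> L (Suc l)" if "Suc l \<le> j" "j \<le> m" for j
        using that
      proof (induction j rule: dec_induct)
        case base thus ?case by simp
      next
        case (step k)
        have "r k \<le> r l" using ranti[of l k] step by simp
        hence "r k \<le> 1" using rl by simp
        hence "r k * L k \<le> L k" using Lpos[of k] step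
          by (simp add: mult_left_le_one_le)
        thus ?case using Lstep[of k] step by simp
      qed
      hence "L m \<le> L (Suc l)" using lm by simp
      thus False using c hm by simp
    qed
  next
    fix l assume "l \<le> m" "1 \<le> L l"
    thus "Q l \<le> P l" using Qpos[of l] unfolding L_def by (simp add: le_divide_eq)
  next
    fix l assume "l \<le> m" "\<not> 1 \<le> L l"
    thus "P l \<le> Q l" using Qpos[of l] unfolding L_def by (simp add: divide_less_eq)
  qed
  have part2: "st_ge m Q P" if h0: "L 0 \<ge> 1" and hm: "L m \<le> 1"
  proof (rule abstract_dom[where S = "\<lambda>l. L l < 1"])
    show "(\<Sum>l\<in>{0..m}. Q l) = (\<Sum>l\<in>{0..m}. P l)" using totP totQ by simp
  next
    fix l assume lm: "l < m" and S: "L l < 1"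
    show "L (Suc l) < 1"
    proof (rule ccontr)
      assume c: "\<not> L (Suc l) < 1"
      have rl: "r l > 1"
      proof (rule ccontr)
        assume "\<not> r l > 1"
        hence "r l * L l \<le> L l" using Lpos[of l] lm by (simp add: mult_left_le_one_le)
        thus False using c S Lstep[OF lm] by simp
      qed
      have "L 0 \<le> L j" if "0 \<le> j" "j \<le> l" for j
        using that
      proof (induction j rule: dec_induct)
        case base thus ?case by simp
      next
        case (step k)
        have "r l \<le> r k" using ranti[of k l] step lm by simp
        hence "r k \<ge> 1" using rl by simp
        hence "L k \<le> r k * L k" using Lpos[of k] step lm
          by (simp add: mult_le_cancel_right1)
        thus ?case using Lstep[of k] step lm by simp
      qed
      hence "L 0 \<le> L l" by simp
      thus False using h0 S by simp
    qed
  next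
    fix l assume "l \<le> m" "L l < 1"
    thus "P l \<le> Q l" using Qpos[of l] unfolding L_def by (simp add: divide_less_eq)
  next
    fix l assume "l \<le> m" "\<not> L l < 1"
    thus "Q l \<le> P l" using Qpos[of l] unfolding L_def by (simp add: le_divide_eq)
  qed
  show ?thesis unfolding LR0 LRm P_def[symmetric] Q_def[symmetric]
    using part1 part2 by blast
qed

end
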